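(* Let $X$ be a bounded degree simplicial complex, and let $X^{\leq 1}$ denote its $1$-skeleton (a bounded degree graph). Then ${}_s\mathrm{TO}^1_X(r)\simeq \mathrm{cw}_{X^{\leq 1}}(r)$.
   Context: A simplicial complex is the topological realisation of an abstract simplicial complex $(S,\mathcal S)$ ($\mathcal S$ a family of finite subsets of $S$ containing singletons, closed under subsets); it is bounded degree if $S$ is countable and $\max_s|\{t\ne s:\{s,t\}\in\mathcal S\}|<\infty$. $|Z|$ is the number of $0$-simplices; closed simplices are sets of points whose support lies in a fixed element of $\mathcal S$; $Z\le X$ means an injection of $0$-simplices sending simplices to simplices (for graphs: $Z$ is isomorphic to a subgraph). For finite $Z$ and continuous $f:Z\to\mathbb R^q$, ${}_s\mathrm{Ov}(f)=\max_{z}|\{\sigma\text{ closed simplex of }Z: z\in f(\sigma)\}|$, ${}_s\mathrm{TO}^q(Z)=\min_f {}_s\mathrm{Ov}(f)$, ${}_s\mathrm{TO}^q_X(r)=\max\{{}_s\mathrm{TO}^q(Z): Z\le X, |Z|\le r\}$. For a finite graph $\Gamma$ with $r$ vertices, the cutwidth $\mathrm{cw}(\Gamma)$ is the minimum over bijections $\sigma:V\Gamma\to\{1,\dots,r\}$ of $\max_i|\{vw\in E\Gamma:\sigma(v)<i\le\sigma(w)\}|$. For a graph $X$, $\mathrm{cw}_X(r)=\max\{\mathrm{cw}(\Gamma):\Gamma\le X, |\Gamma|\le r\}$. $f\lesssim g$ means there is $C$ with $f(r)\le Cg(Cr)+C$ for all $r$; $f\simeq g$ means both directions hold. *)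

theory Defs
  imports "HOL-Analysis.Analysis"
begin

definition abs_simplicial_complex :: "'a set \<Rightarrow> 'a set set \<Rightarrow> bool" where
  "abs_simplicial_complex V S \<longleftrightarrow>
     (\<forall>F\<in>S. finite F \<and> F \<subseteq> V) \<and> (\<forall>v\<in>V. {v} \<in> S) \<and> (\<forall>F\<in>S. \<forall>G. G \<subseteq> F \<longrightarrow> G \<in> S)"

definition bounded_degree :: "'a set \<Rightarrow> 'a set set \<Rightarrow> bool" where
  "bounded_degree V S \<longleftrightarrow> countable V \<and>
     (\<exists>d::nat. \<forall>s\<in>V. finite {t. t \<noteq> s \<and> {s, t} \<in> S} \<and> card {t. t \<noteq> s \<and> {s, t} \<in> S} \<le> d)"

definition realisation :: "'a set \<Rightarrow> 'a set set \<Rightarrow> ('a \<Rightarrow> real) set" where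
  "realisation V S = {x. (\<forall>v. 0 \<le> x v) \<and> {v. x v \<noteq> 0} \<in> S \<and> (\<Sum>v\<in>{v. x v \<noteq> 0}. x v) = 1}"

definition closed_simplex :: "'a set \<Rightarrow> 'a set set \<Rightarrow> 'a set \<Rightarrow> ('a \<Rightarrow> real) set" where
  "closed_simplex V S F = {x \<in> realisation V S. {v. x v \<noteq> 0} \<subseteq> F}"

definition closed_simplices :: "'a set \<Rightarrow> 'a set set \<Rightarrow> ('a \<Rightarrow> real) set set" where
  "closed_simplices V S = closed_simplex V S ` S"

text \<open>Topology on the realisation (for a finite complex this is the usual topology):
subspace of the product topology.\<close>

definition realisation_top :: "'a set \<Rightarrow> 'a set set \<Rightarrow> ('a \<Rightarrow> real) topology" where
  "realisation_top V S = subtopology (powertop_real UNIV) (realisation V S)"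

definition sOv :: "'a set \<Rightarrow> 'a set set \<Rightarrow> (('a \<Rightarrow> real) \<Rightarrow> 'b::euclidean_space) \<Rightarrow> nat" where
  "sOv V S f = Max ((\<lambda>z. card {\<sigma> \<in> closed_simplices V S. z \<in> f ` \<sigma>}) ` UNIV)"

definition sTO :: "'a set \<Rightarrow> 'a set set \<Rightarrow> 'b::euclidean_space itself \<Rightarrow> nat" where
  "sTO V S _ = (LEAST n. \<exists>f :: ('a \<Rightarrow> real) \<Rightarrow> 'b.
        continuous_map (realisation_top V S) euclidean f \<and> sOv V S f = n)"

text \<open>Subcomplexes (a finite Z embeds into X iff it is isomorphic to a subcomplex of X).\<close>

definition subcomplex :: "'a set \<Rightarrow> 'a set set \<Rightarrow> 'a set \<Rightarrow> 'a set set \<Rightarrow> bool" where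
  "subcomplex V' S' V S \<longleftrightarrow> V' \<subseteq> V \<and> S' \<subseteq> S \<and> abs_simplicial_complex V' S'"

definition sTO_X :: "'a set \<Rightarrow> 'a set set \<Rightarrow> 'b::euclidean_space itself \<Rightarrow> nat \<Rightarrow> nat" where
  "sTO_X V S q r = Sup {sTO V' S' q | V' S'. subcomplex V' S' V S \<and> finite V' \<and> card V' \<le> r}"

definition cutwidth :: "'a set \<Rightarrow> 'a set set \<Rightarrow> nat" where
  "cutwidth V E = (LEAST n. \<exists>\<sigma>. bij_betw \<sigma> V {1..card V} \<and>
      n = Max (insert 0 ((\<lambda>i. card {e \<in> E. \<exists>v w. e = {v, w} \<and> \<sigma> v < i \<and> i \<le> \<sigma> w}) ` {1..card V})))"

definition skeleton1_edges :: "'a set set \<Rightarrow> 'a set set" where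
  "skeleton1_edges S = {{s, t} | s t. s \<noteq> t \<and> {s, t} \<in> S}"

definition subgraph :: "'a set \<Rightarrow> 'a set set \<Rightarrow> 'a set \<Rightarrow> 'a set set \<Rightarrow> bool" where
  "subgraph V' E' V E \<longleftrightarrow> V' \<subseteq> V \<and> E' \<subseteq> E \<and> (\<forall>e\<in>E'. e \<subseteq> V')"

definition cw_X :: "'a set \<Rightarrow> 'a set set \<Rightarrow> nat \<Rightarrow> nat" where
  "cw_X V E r = Sup {cutwidth V' E' | V' E'. subgraph V' E' V E \<and> finite V' \<and> card V' \<le> r}"

definition lesssim :: "(nat \<Rightarrow> nat) \<Rightarrow> (nat \<Rightarrow> nat) \<Rightarrow> bool" where
  "lesssim f g \<longleftrightarrow> (\<exists>C::nat. \<forall>r. f r \<le> C * g (C * r) + C)"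

definition asymp_equiv_fun :: "(nat \<Rightarrow> nat) \<Rightarrow> (nat \<Rightarrow> nat) \<Rightarrow> bool" where
  "asymp_equiv_fun f g \<longleftrightarrow> lesssim f g \<and> lesssim g f"

end

theory Submission
  imports Defs
begin



lemma sort_bij:
  fixes g :: "'a \<Rightarrow> real"
  assumes "finite A"
  shows "\<exists>\<sigma>. bij_betw \<sigma> A {1..card A} \<and> (\<forall>u\<in>A. \<forall>w\<in>A. \<sigma> u < \<sigma> w \<longrightarrow> g u \<le> g w)"
  using assms
proof (induction "card A" arbitrary: A)
  case 0
  then show ?case by (auto simp: bij_betw_def)
next
  case (Suc n)
  then have ne: "A \<noteq> {}" by auto
  obtain m where m: "m \<in> A" "\<forall>a\<in>A. g a \<le> g m"
  proof -
    have "Max (g ` A) \<in> g ` A" using Suc.prems ne by (intro Max_in) auto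
    then obtain m where "m \<in> A" "g m = Max (g ` A)" by auto
    moreover have "\<forall>a\<in>A. g a \<le> Max (g ` A)" using Suc.prems by auto
    ultimately show ?thesis using that by auto
  qed
  have cA: "card (A - {m}) = n" using Suc m by auto
  obtain \<sigma> where s: "bij_betw \<sigma> (A - {m}) {1..n}" "\<forall>u\<in>A-{m}. \<forall>w\<in>A-{m}. \<sigma> u < \<sigma> w \<longrightarrow> g u \<le> g w"
    using Suc.hyps(1)[of "A - {m}"] cA Suc.prems by auto
  define \<tau> where "\<tau> = \<sigma>(m := Suc n)"
  have "bij_betw \<tau> (A - {m}) {1..n}"
    using s(1) by (rule bij_betw_cong[THEN iffD1, rotated]) (auto simp: \<tau>_def)
  then have "bij_betw \<tau> ((A - {m}) \<union> {m}) ({1..n} \<union> {\<tau> m})"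
    by (intro notIn_Un_bij_betw) (auto simp: \<tau>_def)
  moreover have "(A - {m}) \<union> {m} = A" using m by auto
  moreover have "{1..n} \<union> {\<tau> m} = {1..card A}" using Suc.hyps(2) by (auto simp: \<tau>_def)
  ultimately have b: "bij_betw \<tau> A {1..card A}" by simp
  have "\<forall>u\<in>A. \<forall>w\<in>A. \<tau> u < \<tau> w \<longrightarrow> g u \<le> g w"
  proof (intro ballI impI)
    fix u w assume uw: "u \<in> A" "w \<in> A" "\<tau> u < \<tau> w"
    show "g u \<le> g w"
    proof (cases "u = m \<or> w = m")
      case True
      moreover have "u \<noteq> m \<Longrightarrow> \<sigma> u \<le> n" using s(1) uw unfolding bij_betw_def by auto
      moreover have "w \<noteq> m \<Longrightarrow> \<sigma> w \<le> n" using s(1) uw unfolding bij_betw_def by auto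
      ultimately show ?thesis using uw m by (auto simp: \<tau>_def split: if_splits)
    next
      case False then show ?thesis using s(2) uw by (auto simp: \<tau>_def)
    qed
  qed
  then show ?case using b by blast
qed




lemma sOv_ge:
  fixes f :: "('a \<Rightarrow> real) \<Rightarrow> real"
  assumes "finite S"
  shows "card {\<sigma> \<in> closed_simplices V S. z \<in> f ` \<sigma>} \<le> sOv V S f"
proof -
  have fin: "finite (closed_simplices V S)" using assms by (simp add: closed_simplices_def)
  have "finite ((\<lambda>z. card {\<sigma> \<in> closed_simplices V S. z \<in> f ` \<sigma>}) ` UNIV)"
    by (rule finite_subset[of _ "{..card (closed_simplices V S)}"])
       (auto intro!: card_mono fin)
  then show ?thesis unfolding sOv_def by (intro Max_ge) auto
qed

lemma sOv_le:
  fixes f :: "('a \<Rightarrow> real) \<Rightarrow> real"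
  assumes "finite S" "\<And>z. card {\<sigma> \<in> closed_simplices V S. z \<in> f ` \<sigma>} \<le> B"
  shows "sOv V S f \<le> B"
proof -
  have fin: "finite (closed_simplices V S)" using assms by (simp add: closed_simplices_def)
  have "finite ((\<lambda>z. card {\<sigma> \<in> closed_simplices V S. z \<in> f ` \<sigma>}) ` UNIV)"
    by (rule finite_subset[of _ "{..card (closed_simplices V S)}"])
       (auto intro!: card_mono fin)
  then show ?thesis unfolding sOv_def using assms(2) by (subst Max_le_iff) auto
qed

lemma sTO_le:
  fixes f :: "('a \<Rightarrow> real) \<Rightarrow> real"
  assumes "continuous_map (realisation_top V S) euclidean f"
  shows "sTO V S TYPE(real) \<le> sOv V S f"
  unfolding sTO_def using assms by (intro Least_le) auto

lemma sTO_ge: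
  assumes "\<And>f :: ('a \<Rightarrow> real) \<Rightarrow> real. continuous_map (realisation_top V S) euclidean f \<Longrightarrow> c \<le> sOv V S f"
  shows "c \<le> sTO V S TYPE(real)"
proof -
  have "\<exists>n. \<exists>f :: ('a \<Rightarrow> real) \<Rightarrow> real. continuous_map (realisation_top V S) euclidean f \<and> sOv V S f = n"
    by (rule exI[of _ "sOv V S (\<lambda>_. 0::real)"]) (auto intro!: exI[of _ "\<lambda>_. 0::real"])
  from LeastI_ex[OF this] obtain f :: "('a \<Rightarrow> real) \<Rightarrow> real" where
    "continuous_map (realisation_top V S) euclidean f" "sOv V S f = sTO V S TYPE(real)"
    unfolding sTO_def by blast
  then show ?thesis using assms by metis
qed

lemma sTO_bound:
  assumes "finite V" "S \<subseteq> Pow V"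
  shows "sTO V S TYPE(real) \<le> 2 ^ card V"
proof -
  have fS: "finite S" using assms finite_subset by blast
  have "sTO V S TYPE(real) \<le> sOv V S (\<lambda>_. 0::real)" by (rule sTO_le) auto
  also have "\<dots> \<le> 2 ^ card V"
  proof (rule sOv_le[OF fS])
    fix z :: real
    have "card {\<sigma> \<in> closed_simplices V S. z \<in> (\<lambda>_. 0::real) ` \<sigma>} \<le> card (closed_simplices V S)"
      using fS by (intro card_mono) (auto simp: closed_simplices_def)
    also have "\<dots> \<le> card S" unfolding closed_simplices_def by (rule card_image_le[OF fS])
    also have "\<dots> \<le> card (Pow V)" using assms by (intro card_mono) auto
    finally show "card {\<sigma> \<in> closed_simplices V S. z \<in> (\<lambda>_. 0::real) ` \<sigma>} \<le> 2 ^ card V"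
      using assms by (simp add: card_Pow)
  qed
  finally show ?thesis .
qed

lemma cutwidth_le:
  assumes "bij_betw \<sigma> V {1..card V}" "\<And>i. i \<in> {1..card V} \<Longrightarrow> card {e \<in> E. \<exists>v w. e = {v, w} \<and> \<sigma> v < i \<and> i \<le> \<sigma> w} \<le> B"
  shows "cutwidth V E \<le> B"
proof -
  have "cutwidth V E \<le> Max (insert 0 ((\<lambda>i. card {e \<in> E. \<exists>v w. e = {v, w} \<and> \<sigma> v < i \<and> i \<le> \<sigma> w}) ` {1..card V}))"
    unfolding cutwidth_def using assms(1) by (intro Least_le) blast
  also have "\<dots> \<le> B" using assms(2) by (subst Max_le_iff) auto
  finally show ?thesis .
qed

lemma cutwidth_bound:
  assumes "finite V" "\<forall>e\<in>E. e \<subseteq> V"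
  shows "cutwidth V E \<le> 2 ^ card V"
proof -
  obtain \<sigma> where s: "bij_betw \<sigma> V {1..card V}"
    using sort_bij[OF assms(1), of "\<lambda>_. 0"] by blast
  have fE: "finite E" using assms by (meson PowI finite_Pow_iff finite_subset subsetI)
  show ?thesis
  proof (rule cutwidth_le[OF s])
    fix i
    have "card {e \<in> E. \<exists>v w. e = {v, w} \<and> \<sigma> v < i \<and> i \<le> \<sigma> w} \<le> card E"
      using fE by (intro card_mono) auto
    also have "\<dots> \<le> card (Pow V)" using assms by (intro card_mono) auto
    finally show "card {e \<in> E. \<exists>v w. e = {v, w} \<and> \<sigma> v < i \<and> i \<le> \<sigma> w} \<le> 2 ^ card V"
      using assms by (simp add: card_Pow)
  qed
qed




lemma edge_ivt:
  fixes f :: "('a \<Rightarrow> real) \<Rightarrow> real"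
  assumes K: "abs_simplicial_complex V S" and e: "{v,w} \<in> S" and vw: "v \<noteq> w"
    and f: "continuous_map (realisation_top V S) euclidean f"
    and z1: "f (\<lambda>u. if u = v then 1 else 0) \<le> z" and z2: "z \<le> f (\<lambda>u. if u = w then 1 else 0)"
  shows "z \<in> f ` closed_simplex V S {v,w}"
proof -
  define p where "p = (\<lambda>(t::real) u. if u = v then 1 - t else if u = w then t else (0::real))"
  have pin: "p t \<in> closed_simplex V S {v,w}" if t: "t \<in> {0..1}" for t
  proof -
    have sub: "{u. p t u \<noteq> 0} \<subseteq> {v,w}" by (auto simp: p_def split: if_splits)
    have "{u. p t u \<noteq> 0} \<in> S" using K e sub unfolding abs_simplicial_complex_def by blast
    moreover have "(\<Sum>u\<in>{u. p t u \<noteq> 0}. p t u) = (\<Sum>u\<in>{v,w}. p t u)"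
      using sub by (intro sum.mono_neutral_left) auto
    moreover have "(\<Sum>u\<in>{v,w}. p t u) = 1" using vw by (simp add: p_def)
    moreover have "\<forall>u. 0 \<le> p t u" using t by (auto simp: p_def)
    ultimately show ?thesis using sub unfolding closed_simplex_def realisation_def by auto
  qed
  have "continuous_map (top_of_set {0..1}) (powertop_real UNIV) p"
    unfolding continuous_map_componentwise_UNIV
  proof
    fix u
    show "continuous_map (top_of_set {0..1}) euclideanreal (\<lambda>x. p x u)"
      by (cases "u = v"; cases "u = w") (auto simp: p_def intro!: continuous_intros)
  qed
  moreover have "p ` topspace (top_of_set {0..1}) \<subseteq> realisation V S"
    using pin by (auto simp: closed_simplex_def)
  ultimately have "continuous_map (top_of_set {0..1}) (realisation_top V S) p"
    unfolding realisation_top_def by (auto simp: continuous_map_in_subtopology)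
  then have "continuous_map (top_of_set {0..1}) euclidean (f \<circ> p)"
    using f by (rule continuous_map_compose)
  then have c: "continuous_on {0..1} (f \<circ> p)" by simp
  have p0: "p 0 = (\<lambda>u. if u = v then 1 else 0)" by (auto simp: p_def)
  have p1: "p 1 = (\<lambda>u. if u = w then 1 else 0)" using vw by (auto simp: p_def)
  obtain t where "0 \<le> t" "t \<le> 1" "(f \<circ> p) t = z"
    using IVT'[of "f \<circ> p" 0 z 1, OF _ _ _ c] z1 z2 p0 p1 by auto
  then show ?thesis using pin[of t] by force
qed




lemma delta_in:
  assumes "{x} \<in> S" "x \<in> F"
  shows "(\<lambda>u. if u = x then 1 else 0::real) \<in> closed_simplex V S F"
proof -
  have "{u. (if u = x then 1 else 0::real) \<noteq> 0} = {x}" by auto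
  then show ?thesis using assms unfolding closed_simplex_def realisation_def by auto
qed

lemma delta_in_D:
  assumes "(\<lambda>u. if u = x then 1 else 0::real) \<in> closed_simplex V S F"
  shows "x \<in> F"
proof -
  have "{u. (if u = x then 1 else 0::real) \<noteq> 0} = {x}" by auto
  then show ?thesis using assms unfolding closed_simplex_def realisation_def by auto
qed

lemma lower:
  assumes K: "abs_simplicial_complex V S" and G: "subgraph V' E' V (skeleton1_edges S)"
    and fin: "finite V'"
  shows "\<exists>S'. subcomplex V' S' V S \<and> cutwidth V' E' \<le> sTO V' S' TYPE(real)"
proof -
  define S' where "S' = {F. \<exists>v\<in>V'. F \<subseteq> {v}} \<union> {F. \<exists>e\<in>E'. F \<subseteq> e}"
  have EV: "\<forall>e\<in>E'. e \<subseteq> V'" "V' \<subseteq> V" "E' \<subseteq> skeleton1_edges S" using G by (auto simp: subgraph_def)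
  have skS: "skeleton1_edges S \<subseteq> S" by (auto simp: skeleton1_edges_def)
  have S'P: "S' \<subseteq> Pow V'"
  proof
    fix F assume "F \<in> S'"
    then consider v where "v \<in> V'" "F \<subseteq> {v}" | e where "e \<in> E'" "F \<subseteq> e" by (auto simp: S'_def)
    then show "F \<in> Pow V'"
    proof cases
      case 1 then show ?thesis by auto
    next
      case 2 then have "e \<subseteq> V'" using EV(1) by blast
      then show ?thesis using 2 by auto
    qed
  qed
  have fS': "finite S'" using S'P fin finite_subset by blast
  have K': "abs_simplicial_complex V' S'"
    unfolding abs_simplicial_complex_def
  proof (intro conjI ballI allI impI)
    fix F assume "F \<in> S'"
    then show FV: "F \<subseteq> V'" using S'P by auto
    then show "finite F" using fin by (rule finite_subset)
  next
    fix v assume "v \<in> V'" then show "{v} \<in> S'" by (auto simp: S'_def)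
  next
    fix F G assume FG: "F \<in> S'" "G \<subseteq> F"
    then consider v where "v \<in> V'" "F \<subseteq> {v}" | e where "e \<in> E'" "F \<subseteq> e" by (auto simp: S'_def)
    then show "G \<in> S'"
    proof cases
      case 1 then have "G \<subseteq> {v}" using FG by auto
      then show ?thesis using 1 by (auto simp: S'_def)
    next
      case 2 then have "G \<subseteq> e" using FG by auto
      then show ?thesis using 2 by (auto simp: S'_def)
    qed
  qed
  have sing: "\<forall>v\<in>V. {v} \<in> S" using K by (simp add: abs_simplicial_complex_def)
  have clos: "\<forall>F\<in>S. \<forall>G. G \<subseteq> F \<longrightarrow> G \<in> S" using K by (simp add: abs_simplicial_complex_def)
  have "S' \<subseteq> S"
  proof
    fix F assume "F \<in> S'"
    then consider v where "v \<in> V'" "F \<subseteq> {v}" | e where "e \<in> E'" "F \<subseteq> e" by (auto simp: S'_def)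
    then show "F \<in> S"
    proof cases
      case 1
      then have "v \<in> V" using EV(2) by (simp add: subset_iff)
      then have "{v} \<in> S" using sing by simp
      then show ?thesis using clos 1(2) by simp
    next
      case 2
      then have "e \<in> S" using EV(3) skS by (simp add: subset_iff)
      then show ?thesis using clos 2(2) by simp
    qed
  qed
  then have sub: "subcomplex V' S' V S" using K' EV by (simp add: subcomplex_def)
  have "cutwidth V' E' \<le> sTO V' S' TYPE(real)"
  proof (rule sTO_ge)
    fix f :: "('a \<Rightarrow> real) \<Rightarrow> real"
    assume f: "continuous_map (realisation_top V' S') euclidean f"
    define \<delta> where "\<delta> = (\<lambda>(x::'a) (u::'a). if u = x then 1 else 0::real)"
    obtain \<sigma> where s: "bij_betw \<sigma> V' {1..card V'}"
      and mono: "\<forall>u\<in>V'. \<forall>w\<in>V'. \<sigma> u < \<sigma> w \<longrightarrow> f (\<delta> u) \<le> f (\<delta> w)"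
      using sort_bij[OF fin, of "\<lambda>u. f (\<delta> u)"] by blast
    show "cutwidth V' E' \<le> sOv V' S' f"
    proof (rule cutwidth_le[OF s])
      fix i assume i: "i \<in> {1..card V'}"
      define C where "C = {e \<in> E'. \<exists>v w. e = {v, w} \<and> \<sigma> v < i \<and> i \<le> \<sigma> w}"
      have "i \<in> \<sigma> ` V'" using s i by (simp add: bij_betw_def)
      then obtain u where u: "u \<in> V'" "\<sigma> u = i" by blast
      define z where "z = f (\<delta> u)"
      have inj: "inj_on (closed_simplex V' S') E'"
      proof (rule inj_onI)
        fix e1 e2 assume e12: "e1 \<in> E'" "e2 \<in> E'" "closed_simplex V' S' e1 = closed_simplex V' S' e2"
        have "\<And>x. x \<in> e1 \<Longrightarrow> x \<in> e2" "\<And>x. x \<in> e2 \<Longrightarrow> x \<in> e1"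
        proof -
          fix x assume x: "x \<in> e1"
          then have "{x} \<in> S'" using e12 EV by (auto simp: S'_def)
          then show "x \<in> e2" using delta_in[of x S' e1 V'] delta_in_D[of x V' S' e2] x e12 by auto
        next
          fix x assume x: "x \<in> e2"
          then have "{x} \<in> S'" using e12 EV by (auto simp: S'_def)
          then show "x \<in> e1" using delta_in[of x S' e2 V'] delta_in_D[of x V' S' e1] x e12 by auto
        qed
        then show "e1 = e2" by blast
      qed
      have "closed_simplex V' S' ` C \<subseteq> {\<tau> \<in> closed_simplices V' S'. z \<in> f ` \<tau>}"
      proof
        fix \<tau> assume "\<tau> \<in> closed_simplex V' S' ` C"
        then obtain e a b where e: "e \<in> E'" "e = {a,b}" "\<sigma> a < i" "i \<le> \<sigma> b" "\<tau> = closed_simplex V' S' e"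
          unfolding C_def by auto
        have ab: "a \<in> V'" "b \<in> V'" using e EV by auto
        have "a \<noteq> b" using e by auto
        have eS: "e \<in> S'" using e by (auto simp: S'_def)
        have "f (\<delta> a) \<le> z" using mono ab u e unfolding z_def by auto
        moreover have "z \<le> f (\<delta> b)"
        proof (cases "\<sigma> b = i")
          case True
          then have "b = u" using s u ab unfolding bij_betw_def inj_on_def by metis
          then show ?thesis by (simp add: z_def)
        next
          case False then show ?thesis using mono ab u e unfolding z_def by auto
        qed
        ultimately have "z \<in> f ` closed_simplex V' S' {a,b}"
          using edge_ivt[OF K', of a b f z] eS e \<open>a \<noteq> b\<close> f unfolding \<delta>_def by auto
        then show "\<tau> \<in> {\<tau> \<in> closed_simplices V' S'. z \<in> f ` \<tau>}"
          using e eS by (auto simp: closed_simplices_def)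
      qed
      moreover have "finite {\<tau> \<in> closed_simplices V' S'. z \<in> f ` \<tau>}"
        using fS' by (simp add: closed_simplices_def)
      ultimately have "card (closed_simplex V' S' ` C) \<le> card {\<tau> \<in> closed_simplices V' S'. z \<in> f ` \<tau>}"
        by (rule card_mono[rotated])
      moreover have "card (closed_simplex V' S' ` C) = card C"
        using inj by (intro card_image) (auto simp: C_def intro: inj_on_subset)
      ultimately show "card C \<le> sOv V' S' f" using sOv_ge[OF fS', of V' z f] by linarith
    qed
  qed
  then show ?thesis using sub by blast
qed




lemma cutwidth_opt:
  assumes "finite V"
  shows "\<exists>\<sigma>. bij_betw \<sigma> V {1..card V} \<and>
    (\<forall>i\<in>{1..card V}. card {e \<in> E. \<exists>v w. e = {v, w} \<and> \<sigma> v < i \<and> i \<le> \<sigma> w} \<le> cutwidth V E)"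
proof -
  obtain \<sigma>0 where s0: "bij_betw \<sigma>0 V {1..card V}"
    using sort_bij[OF assms, of "\<lambda>_. 0"] by blast
  have "\<exists>n \<sigma>. bij_betw \<sigma> V {1..card V} \<and>
      n = Max (insert 0 ((\<lambda>i. card {e \<in> E. \<exists>v w. e = {v, w} \<and> \<sigma> v < i \<and> i \<le> \<sigma> w}) ` {1..card V}))"
    using s0 by blast
  from LeastI_ex[OF this] obtain \<sigma> where s: "bij_betw \<sigma> V {1..card V}" and
    eq: "cutwidth V E = Max (insert 0 ((\<lambda>i. card {e \<in> E. \<exists>v w. e = {v, w} \<and> \<sigma> v < i \<and> i \<le> \<sigma> w}) ` {1..card V}))"
    unfolding cutwidth_def by blast
  have "\<forall>i\<in>{1..card V}. card {e \<in> E. \<exists>v w. e = {v, w} \<and> \<sigma> v < i \<and> i \<le> \<sigma> w} \<le> cutwidth V E"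
    unfolding eq by (auto intro!: Max_ge)
  then show ?thesis using s by blast
qed

lemma star_bound:
  assumes K: "abs_simplicial_complex V S" and deg: "finite {t. t \<noteq> u \<and> {u, t} \<in> S}" "card {t. t \<noteq> u \<and> {u, t} \<in> S} \<le> d"
  shows "finite {F \<in> S. u \<in> F} \<and> card {F \<in> S. u \<in> F} \<le> 2 ^ (d + 1)"
proof -
  define N where "N = {t. t \<noteq> u \<and> {u, t} \<in> S}"
  have clos: "\<forall>F\<in>S. \<forall>G. G \<subseteq> F \<longrightarrow> G \<in> S" using K by (simp add: abs_simplicial_complex_def)
  have sub: "{F \<in> S. u \<in> F} \<subseteq> Pow (insert u N)"
  proof
    fix F assume F: "F \<in> {F \<in> S. u \<in> F}"
    have "t \<in> insert u N" if t: "t \<in> F" for t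
    proof (cases "t = u")
      case False
      have "{u, t} \<subseteq> F" using F t by auto
      then have "{u, t} \<in> S" using clos F by blast
      then show ?thesis using False by (simp add: N_def)
    qed simp
    then show "F \<in> Pow (insert u N)" by auto
  qed
  have fN: "finite (insert u N)" using deg by (simp add: N_def)
  have "card {F \<in> S. u \<in> F} \<le> card (Pow (insert u N))"
    using sub fN by (intro card_mono) auto
  also have "\<dots> = 2 ^ card (insert u N)" using fN by (simp add: card_Pow)
  also have "\<dots> \<le> 2 ^ (d + 1)"
  proof (rule power_increasing)
    have "card (insert u N) \<le> Suc (card N)" by (rule card_insert_le_m1) auto
    then show "card (insert u N) \<le> d + 1" using deg by (simp add: N_def)
  qed simp
  finally show ?thesis using sub fN by (meson finite_Pow_iff finite_subset)
qed




lemma convex_exists: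
  fixes x h :: "'a \<Rightarrow> real"
  assumes P: "finite P" and pos: "\<forall>v\<in>P. x v > 0" and s: "(\<Sum>v\<in>P. x v) = 1"
    and z: "z = (\<Sum>v\<in>P. x v * h v)"
  shows "(\<exists>a\<in>P. h a \<le> z) \<and> (\<exists>b\<in>P. z \<le> h b)"
proof -
  have ne: "P \<noteq> {}" using s by auto
  have zz: "(\<Sum>v\<in>P. x v * z) = z" using s by (simp add: sum_distrib_right[symmetric])
  have "\<exists>a\<in>P. h a \<le> z"
  proof (rule ccontr)
    assume "\<not> ?thesis"
    then have "\<forall>v\<in>P. x v * z < x v * h v" using pos by (auto intro: mult_strict_left_mono)
    then have "(\<Sum>v\<in>P. x v * z) < (\<Sum>v\<in>P. x v * h v)" using P ne by (intro sum_strict_mono) auto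
    then show False using zz z by simp
  qed
  moreover have "\<exists>b\<in>P. z \<le> h b"
  proof (rule ccontr)
    assume "\<not> ?thesis"
    then have "\<forall>v\<in>P. x v * h v < x v * z" using pos by (auto intro: mult_strict_left_mono)
    then have "(\<Sum>v\<in>P. x v * h v) < (\<Sum>v\<in>P. x v * z)" using P ne by (intro sum_strict_mono) auto
    then show False using zz z by simp
  qed
  ultimately show ?thesis by blast
qed




lemma upper:
  assumes K: "abs_simplicial_complex V S"
    and deg: "\<forall>s\<in>V. finite {t. t \<noteq> s \<and> {s, t} \<in> S} \<and> card {t. t \<noteq> s \<and> {s, t} \<in> S} \<le> d"
    and sub: "subcomplex V' S' V S" and fin: "finite V'"
  shows "sTO V' S' TYPE(real) \<le> 2 ^ (d + 1) * (1 + cutwidth V' (skeleton1_edges S'))"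
proof -
  define E' where "E' = skeleton1_edges S'"
  define Kb :: nat where "Kb = 2 ^ (d + 1)"
  define cw where "cw = cutwidth V' E'"
  have K': "abs_simplicial_complex V' S'" and VV: "V' \<subseteq> V" and SS: "S' \<subseteq> S"
    using sub by (auto simp: subcomplex_def)
  have S'P: "S' \<subseteq> Pow V'" using K' by (auto simp: abs_simplicial_complex_def)
  have fS': "finite S'" using S'P fin finite_subset by blast
  have clos': "\<forall>F\<in>S'. \<forall>G. G \<subseteq> F \<longrightarrow> G \<in> S'" using K' by (simp add: abs_simplicial_complex_def)
  have E'V: "\<forall>e\<in>E'. e \<subseteq> V'" using S'P by (auto simp: E'_def skeleton1_edges_def)
  have fE': "finite E'"
  proof -
    have "E' \<subseteq> S'" by (auto simp: E'_def skeleton1_edges_def)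
    then show ?thesis using fS' finite_subset by blast
  qed
  have B: "finite {F \<in> S. u \<in> F} \<and> card {F \<in> S. u \<in> F} \<le> Kb" if "u \<in> V" for u
    using star_bound[OF K, of u d] deg that by (simp add: Kb_def)
  obtain \<sigma> where s: "bij_betw \<sigma> V' {1..card V'}" and
    opt: "\<forall>i\<in>{1..card V'}. card {e \<in> E'. \<exists>v w. e = {v, w} \<and> \<sigma> v < i \<and> i \<le> \<sigma> w} \<le> cw"
    using cutwidth_opt[OF fin, of E'] unfolding cw_def by blast
  have srange: "\<sigma> v \<in> {1..card V'}" if "v \<in> V'" for v using s that by (auto simp: bij_betw_def)
  define f where "f = (\<lambda>x::'a \<Rightarrow> real. \<Sum>v\<in>V'. x v * real (\<sigma> v))"
  have fc: "continuous_map (realisation_top V' S') euclidean f"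
    unfolding f_def realisation_top_def
    by (intro continuous_map_from_subtopology continuous_map_sum continuous_map_real_mult
        continuous_map_product_projection) (auto simp: fin)
  have "sTO V' S' TYPE(real) \<le> sOv V' S' f" by (rule sTO_le[OF fc])
  also have "sOv V' S' f \<le> Kb * (1 + cw)"
  proof (rule sOv_le[OF fS'])
    fix z :: real
    define i where "i = nat \<lceil>z\<rceil>"
    define C where "C = {e \<in> E'. \<exists>v w. e = {v,w} \<and> \<sigma> v < i \<and> i \<le> \<sigma> w}"
    define U where "U = {u\<in>V'. \<sigma> u = i}"
    define A where "A = {F\<in>S'. z \<in> f ` closed_simplex V' S' F}"
    define X where "X = (\<Union>u\<in>U. {F\<in>S. u\<in>F})"
    define Y where "Y = (\<Union>e\<in>C. {F\<in>S. e \<subseteq> F})"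
    have Asub: "A \<subseteq> X \<union> Y"
    proof
      fix F assume "F \<in> A"
      then obtain x where F: "F \<in> S'" "x \<in> closed_simplex V' S' F" "z = f x" by (auto simp: A_def)
      define P where "P = {v. x v \<noteq> 0}"
      have P: "P \<in> S'" "P \<subseteq> F" "\<forall>v. 0 \<le> x v" "(\<Sum>v\<in>P. x v) = 1"
        using F by (auto simp: closed_simplex_def realisation_def P_def)
      have PV: "P \<subseteq> V'" using P S'P by auto
      have fP: "finite P" using PV fin finite_subset by blast
      have zP: "z = (\<Sum>v\<in>P. x v * real (\<sigma> v))"
        unfolding F(3) f_def by (rule sum.mono_neutral_right[OF fin PV]) (auto simp: P_def)
      have pos: "\<forall>v\<in>P. x v > 0" using P(3) by (auto simp: P_def order_le_less)
      obtain a b where ab: "a\<in>P" "b\<in>P" "real (\<sigma> a) \<le> z" "z \<le> real (\<sigma> b)"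
        using convex_exists[OF fP pos P(4) zP] by blast
      have aV: "a \<in> V'" "b \<in> V'" using ab PV by auto
      have "z \<ge> 1" using srange[OF aV(1)] ab by auto
      then have ci: "real i = of_int \<lceil>z\<rceil>" unfolding i_def by simp
      have iz: "z \<le> real i" using ci by simp
      have ib: "i \<le> \<sigma> b"
      proof -
        have "z \<le> of_int (int (\<sigma> b))" using ab(4) by simp
        then have "\<lceil>z\<rceil> \<le> int (\<sigma> b)" by (rule ceiling_le_iff[THEN iffD2])
        then show ?thesis unfolding i_def by (simp only: nat_le_iff)
      qed
      have FS: "F \<in> S" using F SS by auto
      show "F \<in> X \<union> Y"
      proof (cases "\<sigma> a < i")
        case True
        have abP: "{a,b} \<subseteq> P" using ab by auto
        have abS: "{a,b} \<in> S'" using clos'[rule_format, OF P(1) abP] .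
        have "a \<noteq> b" using True ib by auto
        then have "{a,b} \<in> E'" using abS unfolding E'_def skeleton1_edges_def by blast
        then have "{a,b} \<in> C" using True ib unfolding C_def by blast
        moreover have "{a,b} \<subseteq> F" using abP P(2) by auto
        ultimately show ?thesis using FS unfolding Y_def by blast
      next
        case False
        then have "real (\<sigma> a) \<ge> real i" by simp
        then have "\<sigma> a = i" using iz ab(3) by linarith
        then have "a \<in> U" using aV unfolding U_def by blast
        moreover have "a \<in> F" using ab P(2) by auto
        ultimately show ?thesis using FS unfolding X_def by blast
      qed
    qed
    have fU: "finite U" using fin by (simp add: U_def)
    have fC: "finite C" using fE' by (simp add: C_def)
    have cU: "card U \<le> 1"
    proof -
      have "\<forall>a\<in>U. \<forall>b\<in>U. a = b" using s unfolding U_def bij_betw_def inj_on_def by auto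
      then show ?thesis using fU card_le_Suc0_iff_eq by auto
    qed
    have cC: "card C \<le> cw"
    proof (cases "i \<in> {1..card V'}")
      case True then show ?thesis using opt unfolding C_def by blast
    next
      case False
      have "C = {}"
      proof (rule ccontr)
        assume "C \<noteq> {}"
        then obtain e v w where "e \<in> E'" "e = {v,w}" "\<sigma> v < i" "i \<le> \<sigma> w" unfolding C_def by blast
        moreover have "v \<in> V'" "w \<in> V'" using calculation E'V by auto
        ultimately show False using srange False by fastforce
      qed
      then show ?thesis by simp
    qed
    have BU: "finite {F\<in>S. u\<in>F} \<and> card {F\<in>S. u\<in>F} \<le> Kb" if "u \<in> U" for u
      using B that VV unfolding U_def by auto
    have BC: "finite {F\<in>S. e \<subseteq> F} \<and> card {F\<in>S. e \<subseteq> F} \<le> Kb" if eC: "e \<in> C" for e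
    proof -
      obtain v w where e: "e \<in> E'" "e = {v,w}" using eC unfolding C_def by blast
      then have "e \<subseteq> V'" using E'V by blast
      then have "v \<in> V" using e(2) VV by auto
      then have "finite {F\<in>S. v\<in>F} \<and> card {F\<in>S. v\<in>F} \<le> Kb" by (rule B)
      moreover have "{F\<in>S. e \<subseteq> F} \<subseteq> {F\<in>S. v\<in>F}" using e by auto
      ultimately show ?thesis by (meson card_mono finite_subset order_trans)
    qed
    have fX: "finite X" unfolding X_def using fU BU by blast
    have fY: "finite Y" unfolding Y_def using fC BC by blast
    have cX: "card X \<le> Kb"
    proof -
      have "card X \<le> (\<Sum>u\<in>U. card {F\<in>S. u\<in>F})" unfolding X_def by (rule card_UN_le[OF fU])
      also have "\<dots> \<le> (\<Sum>u\<in>U. Kb)" using BU by (intro sum_mono) auto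
      also have "\<dots> = card U * Kb" by simp
      also have "\<dots> \<le> Kb" using cU by (cases "card U") auto
      finally show ?thesis .
    qed
    have cY: "card Y \<le> cw * Kb"
    proof -
      have "card Y \<le> (\<Sum>e\<in>C. card {F\<in>S. e \<subseteq> F})" unfolding Y_def by (rule card_UN_le[OF fC])
      also have "\<dots> \<le> (\<Sum>e\<in>C. Kb)" using BC by (intro sum_mono) auto
      also have "\<dots> = card C * Kb" by simp
      also have "\<dots> \<le> cw * Kb" using cC by simp
      finally show ?thesis .
    qed
    have fA: "finite A" using fS' by (simp add: A_def)
    have "{\<tau> \<in> closed_simplices V' S'. z \<in> f ` \<tau>} = closed_simplex V' S' ` A"
      by (auto simp: closed_simplices_def A_def)
    then have "card {\<tau> \<in> closed_simplices V' S'. z \<in> f ` \<tau>} \<le> card A"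
      using card_image_le[OF fA] by simp
    also have "\<dots> \<le> card (X \<union> Y)" using Asub fX fY by (intro card_mono) auto
    also have "\<dots> \<le> card X + card Y" by (rule card_Un_le)
    also have "\<dots> \<le> Kb * (1 + cw)" using cX cY by (simp add: algebra_simps)
    finally show "card {\<tau> \<in> closed_simplices V' S'. z \<in> f ` \<tau>} \<le> Kb * (1 + cw)" .
  qed
  finally show ?thesis unfolding Kb_def cw_def E'_def .
qed




theorem theorem1p4:
  fixes V :: "'a set" and S :: "'a set set"
  assumes "abs_simplicial_complex V S" and "bounded_degree V S"
  shows "asymp_equiv_fun (sTO_X V S TYPE(real)) (cw_X V (skeleton1_edges S))"
proof -
  note K = assms(1)
  obtain d where deg: "\<forall>s\<in>V. finite {t. t \<noteq> s \<and> {s, t} \<in> S} \<and> card {t. t \<noteq> s \<and> {s, t} \<in> S} \<le> d"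
    using assms(2) unfolding bounded_degree_def by blast
  define T where "T = (\<lambda>r. {sTO V' S' TYPE(real) | V' S'. subcomplex V' S' V S \<and> finite V' \<and> card V' \<le> r})"
  define W where "W = (\<lambda>r. {cutwidth V' E' | V' E'. subgraph V' E' V (skeleton1_edges S) \<and> finite V' \<and> card V' \<le> r})"
  have sTOX: "sTO_X V S TYPE(real) r = Sup (T r)" for r unfolding sTO_X_def T_def by simp
  have cwX: "cw_X V (skeleton1_edges S) r = Sup (W r)" for r unfolding cw_X_def W_def by simp
  have Tne: "T r \<noteq> {}" for r
  proof -
    have "subcomplex ({}::'a set) {} V S" by (simp add: subcomplex_def abs_simplicial_complex_def)
    then have "sTO ({}::'a set) {} TYPE(real) \<in> T r" unfolding T_def mem_Collect_eq
      by (intro exI[of _ "{}::'a set"] exI[of _ "{}::'a set set"] conjI) simp_all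
    then show ?thesis by auto
  qed
  have Wne: "W r \<noteq> {}" for r
  proof -
    have "subgraph ({}::'a set) {} V (skeleton1_edges S)" by (simp add: subgraph_def)
    then have "cutwidth ({}::'a set) {} \<in> W r" unfolding W_def mem_Collect_eq
      by (intro exI[of _ "{}::'a set"] exI[of _ "{}::'a set set"] conjI) simp_all
    then show ?thesis by auto
  qed
  have Tbdd: "bdd_above (T r)" for r
  proof (rule bdd_aboveI[of _ "2 ^ r"])
    fix t assume "t \<in> T r"
    then obtain V' S' where t: "t = sTO V' S' TYPE(real)" "subcomplex V' S' V S" "finite V'" "card V' \<le> r"
      unfolding T_def by blast
    have "S' \<subseteq> Pow V'" using t(2) by (auto simp: subcomplex_def abs_simplicial_complex_def)
    then have "t \<le> 2 ^ card V'" using t sTO_bound by blast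
    also have "\<dots> \<le> 2 ^ r" using t(4) by (simp add: power_increasing)
    finally show "t \<le> 2 ^ r" .
  qed
  have Wbdd: "bdd_above (W r)" for r
  proof (rule bdd_aboveI[of _ "2 ^ r"])
    fix t assume "t \<in> W r"
    then obtain V' E' where t: "t = cutwidth V' E'" "subgraph V' E' V (skeleton1_edges S)" "finite V'" "card V' \<le> r"
      unfolding W_def by blast
    have "\<forall>e\<in>E'. e \<subseteq> V'" using t(2) by (simp add: subgraph_def)
    then have "t \<le> 2 ^ card V'" using t cutwidth_bound by blast
    also have "\<dots> \<le> 2 ^ r" using t(4) by (simp add: power_increasing)
    finally show "t \<le> 2 ^ r" .
  qed
  define C :: nat where "C = 2 ^ (d + 1)"
  have C1: "1 \<le> C" unfolding C_def by simp
  have L1: "lesssim (sTO_X V S TYPE(real)) (cw_X V (skeleton1_edges S))"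
    unfolding lesssim_def
  proof (intro exI allI)
    fix r
    show "sTO_X V S TYPE(real) r \<le> C * cw_X V (skeleton1_edges S) (C * r) + C"
      unfolding sTOX
    proof (rule cSup_least[OF Tne])
      fix t assume "t \<in> T r"
      then obtain V' S' where t: "t = sTO V' S' TYPE(real)" "subcomplex V' S' V S" "finite V'" "card V' \<le> r"
        unfolding T_def by blast
      have "t \<le> C * (1 + cutwidth V' (skeleton1_edges S'))"
        using upper[OF K deg t(2) t(3)] t(1) by (simp add: C_def)
      moreover have "cutwidth V' (skeleton1_edges S') \<le> cw_X V (skeleton1_edges S) (C * r)"
      proof -
        have sub: "V' \<subseteq> V" "S' \<subseteq> S" "S' \<subseteq> Pow V'"
          using t(2) by (auto simp: subcomplex_def abs_simplicial_complex_def)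
        have "subgraph V' (skeleton1_edges S') V (skeleton1_edges S)"
          using sub unfolding subgraph_def skeleton1_edges_def by blast
        moreover have "card V' \<le> C * r" using t(4) C1
          by (metis le_trans mult_1 mult_le_mono1)
        ultimately have "cutwidth V' (skeleton1_edges S') \<in> W (C * r)"
          using t(3) unfolding W_def mem_Collect_eq by (intro exI[of _ V'] exI[of _ "skeleton1_edges S'"] conjI) simp_all
        then show ?thesis unfolding cwX by (rule cSup_upper[OF _ Wbdd])
      qed
      ultimately have "t \<le> C * (1 + cw_X V (skeleton1_edges S) (C * r))"
        by (meson le_trans mult_le_mono2 add_le_mono1 add_left_mono)
      then show "t \<le> C * cw_X V (skeleton1_edges S) (C * r) + C"
        by (simp add: algebra_simps)
    qed
  qed
  have L2: "lesssim (cw_X V (skeleton1_edges S)) (sTO_X V S TYPE(real))"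
    unfolding lesssim_def
  proof (intro exI[of _ 1] allI)
    fix r
    have "cw_X V (skeleton1_edges S) r \<le> sTO_X V S TYPE(real) r"
      unfolding cwX
    proof (rule cSup_least[OF Wne])
      fix t assume "t \<in> W r"
      then obtain V' E' where t: "t = cutwidth V' E'" "subgraph V' E' V (skeleton1_edges S)" "finite V'" "card V' \<le> r"
        unfolding W_def by blast
      obtain S' where S': "subcomplex V' S' V S" "cutwidth V' E' \<le> sTO V' S' TYPE(real)"
        using lower[OF K t(2) t(3)] by blast
      have "sTO V' S' TYPE(real) \<in> T r" using S' t unfolding T_def mem_Collect_eq
        by (intro exI[of _ V'] exI[of _ S'] conjI) simp_all
      then have "sTO V' S' TYPE(real) \<le> sTO_X V S TYPE(real) r" unfolding sTOX by (rule cSup_upper[OF _ Tbdd])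
      then show "t \<le> sTO_X V S TYPE(real) r" using S'(2) t(1) by simp
    qed
    then show "cw_X V (skeleton1_edges S) r \<le> 1 * sTO_X V S TYPE(real) (1 * r) + 1" by simp
  qed
  show ?thesis using L1 L2 by (simp add: asymp_equiv_fun_def)
qed


end
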